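(* Let $w$ be a word and let $v$ be an explicit node of the Cover Suffix Tree $\mathit{CST}(w)$ other than the root, and let $v_1,v_2,\ldots,v_k$ be the consecutive implicit nodes on the edge from $v$ to its explicit parent, ordered so that $|v_i|=|v|-i$. Then for $1\le i\le k$, $$\c(v_i)=\c(v)-i\,\Delta(v);$$ in particular $(\c(v_i))_{i=1}^k$ is an arithmetic progression.
   Context: Positions of $w$ are $1,\ldots,n$. The suffix trie of $w$ has one node for each factor of $w$ (the root for the empty word), the parent of the node of $ua$ ($a$ a letter) being the node of $u$; for a node $v$, $\hat v$ denotes the corresponding factor and $|v|=|\hat v|$. In the suffix tree of $w$, the explicit nodes are the root, the nodes with at least two children, and the nodes corresponding to suffixes of $w$; all other nodes are implicit, and each edge is a maximal upward path of implicit nodes between an explicit node and its nearest explicit proper ancestor (its explicit parent). $\mathit{CST}(w)$ is obtained by additionally making explicit every node $v$ (an extra node) such that $\hat v\hat v$ is a factor of $w$ with $\hat v$ primitive (a word $u$ is primitive if $u=y^k$ implies $y=u$). $\mathit{Occ}(v,w)$ is the set of starting positions of occurrences of $\hat v$ in $w$; for a set $X$ of integers, $\mathrm{next}_X(x)=\min\{y\in X:y>x\}$ (or $\infty$ if $x=\max X$), and $\delta(i,v)=\mathrm{next}_{\mathit{Occ}(v,w)}(i)-i$ for $i\in \mathit{Occ}(v,w)$. $\mathit{Covered}(u,w)$ is the number of positions of $w$ lying within some occurrence of $u$. Finally $\c(v)=\mathit{Covered}(\hat v,w)$ and $\Delta(v)=|\{i\in\mathit{Occ}(v,w):\delta(i,v)\ge|v|\}|$.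 *)

theory Defs
  imports Main "HOL-Library.Sublist" "HOL-Library.Extended_Nat"
begin

text \<open>Words are lists; positions of w are 1..length w. Nodes of the suffix trie
are identified with the factors they represent (the root is the empty word);
the parent of the node of u@[a] is the node of u, so ancestors are prefixes.\<close>

definition primitive :: "'a list \<Rightarrow> bool" where
  "primitive u \<longleftrightarrow> (\<forall>y k. u = concat (replicate k y) \<longrightarrow> y = u)"

definition st_explicit :: "'a list \<Rightarrow> 'a list \<Rightarrow> bool" where
  "st_explicit w u \<longleftrightarrow> sublist u w \<and>
     (u = [] \<or> card {a. sublist (u @ [a]) w} \<ge> 2 \<or> suffix u w)"

definition cst_explicit :: "'a list \<Rightarrow> 'a list \<Rightarrow> bool" where
  "cst_explicit w u \<longleftrightarrow> st_explicit w u \<or>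
     (sublist u w \<and> sublist (u @ u) w \<and> primitive u)"

definition cst_parent_len :: "'a list \<Rightarrow> 'a list \<Rightarrow> nat" where
  "cst_parent_len w v = Max (length ` {u. strict_prefix u v \<and> cst_explicit w u})"

text \<open>Number k of implicit nodes on the edge from v to its explicit parent.\<close>
definition edge_len :: "'a list \<Rightarrow> 'a list \<Rightarrow> nat" where
  "edge_len w v = length v - cst_parent_len w v - 1"

definition Occ :: "'a list \<Rightarrow> 'a list \<Rightarrow> nat set" where
  "Occ u w = {i. 1 \<le> i \<and> i - 1 + length u \<le> length w \<and> take (length u) (drop (i - 1) w) = u}"

definition next_in :: "nat set \<Rightarrow> nat \<Rightarrow> enat" where
  "next_in X x = (if \<exists>y\<in>X. y > x then enat (Min {y\<in>X. y > x}) else \<infinity>)"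

definition delta :: "'a list \<Rightarrow> nat \<Rightarrow> 'a list \<Rightarrow> enat" where
  "delta w i v = next_in (Occ v w) i - enat i"

definition Covered :: "'a list \<Rightarrow> 'a list \<Rightarrow> nat" where
  "Covered u w = card {p. 1 \<le> p \<and> p \<le> length w \<and>
       (\<exists>i\<in>Occ u w. i \<le> p \<and> p < i + length u)}"

definition cov :: "'a list \<Rightarrow> 'a list \<Rightarrow> nat" where
  "cov w v = Covered v w"

definition Delta :: "'a list \<Rightarrow> 'a list \<Rightarrow> nat" where
  "Delta w v = card {i\<in>Occ v w. delta w i v \<ge> enat (length v)}"

end

theory Submission
  imports Defs
begin

lemma sublist_td: "sublist (take a (drop b w)) w"
  using sublist_order.order_trans[OF sublist_take sublist_drop] by blast

lemma occ_iff: "j \<in> Occ u w \<longleftrightarrow> 1 \<le> j \<and> j - 1 + length u \<le> length w \<and>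
   (\<forall>t<length u. w ! (j - 1 + t) = u ! t)"
proof
  assume "j \<in> Occ u w"
  then have a: "1 \<le> j" "j - 1 + length u \<le> length w" "take (length u) (drop (j - 1) w) = u"
    unfolding Occ_def by auto
  have "\<forall>t<length u. w ! (j - 1 + t) = u ! t"
  proof (intro allI impI)
    fix t assume "t < length u"
    then have "u ! t = take (length u) (drop (j - 1) w) ! t" using a by simp
    also have "\<dots> = w ! (j - 1 + t)" using \<open>t < length u\<close> a(2) by simp
    finally show "w ! (j - 1 + t) = u ! t" by simp
  qed
  then show "1 \<le> j \<and> j - 1 + length u \<le> length w \<and> (\<forall>t<length u. w ! (j - 1 + t) = u ! t)"
    using a by simp
next
  assume h: "1 \<le> j \<and> j - 1 + length u \<le> length w \<and> (\<forall>t<length u. w ! (j - 1 + t) = u ! t)"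
  have "take (length u) (drop (j - 1) w) = u"
    by (rule nth_equalityI) (use h in auto)
  with h show "j \<in> Occ u w" unfolding Occ_def by auto
qed

lemma occ_finite: "finite (Occ u w)"
proof -
  have "Occ u w \<subseteq> {..length w + 1}" unfolding Occ_def by auto
  thus ?thesis using finite_subset by blast
qed

lemma covered_eq: "Covered u w = card (\<Union>j\<in>Occ u w. {j..<j + length u})"
proof -
  have "{p. 1 \<le> p \<and> p \<le> length w \<and> (\<exists>i\<in>Occ u w. i \<le> p \<and> p < i + length u)}
      = (\<Union>j\<in>Occ u w. {j..<j + length u})"
    unfolding Occ_def by auto
  thus ?thesis unfolding Covered_def by simp
qed

lemma delta_ge:
  assumes "finite Oc" "Occ v w = Oc"
  shows "(delta w j v \<ge> enat L) \<longleftrightarrow> (\<forall>y\<in>Oc. j < y \<longrightarrow> j + L \<le> y)"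
proof (cases "\<exists>y\<in>Oc. y > j")
  case True
  let ?M = "Min {y\<in>Oc. y > j}"
  have fin: "finite {y\<in>Oc. y > j}" using assms by auto
  have ne: "{y\<in>Oc. y > j} \<noteq> {}" using True by auto
  have M: "?M \<in> Oc" "?M > j" using Min_in[OF fin ne] by auto
  have Mle: "\<And>y. y \<in> Oc \<Longrightarrow> y > j \<Longrightarrow> ?M \<le> y" using Min_le[OF fin] by auto
  have "delta w j v = enat (?M - j)"
    unfolding delta_def next_in_def using True assms by simp
  then show ?thesis using M Mle by fastforce
next
  case False
  then have "delta w j v = \<infinity>" unfolding delta_def next_in_def using assms by simp
  then show ?thesis using False by auto
qed

lemma nth_concat_replicate:
  "t < k * length z \<Longrightarrow> concat (replicate k z) ! t = z ! (t mod length z)"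
proof (induction k arbitrary: t)
  case 0 then show ?case by simp
next
  case (Suc k)
  show ?case
  proof (cases "t < length z")
    case True then show ?thesis by (simp add: nth_append)
  next
    case False
    then have "concat (replicate (Suc k) z) ! t = concat (replicate k z) ! (t - length z)"
      by (simp add: nth_append)
    also have "\<dots> = z ! ((t - length z) mod length z)" using Suc False by auto
    also have "(t - length z) mod length z = t mod length z" using False
      by (simp add: le_mod_geq)
    finally show ?thesis .
  qed
qed


lemma count_lemma:
  fixes Oc :: "nat set" and m L :: nat
  assumes fin: "finite Oc" and mL: "m \<le> L"
    and H: "\<And>j y. j \<in> Oc \<Longrightarrow> y \<in> Oc \<Longrightarrow> j < y \<Longrightarrow> y < j + L \<Longrightarrow> \<exists>y'\<in>Oc. j < y' \<and> y' \<le> j + m"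
  shows "card (\<Union>j\<in>Oc. {j..<j + L}) = card (\<Union>j\<in>Oc. {j..<j + m})
           + (L - m) * card {j\<in>Oc. \<forall>y\<in>Oc. j < y \<longrightarrow> j + L \<le> y}"
proof -
  define SL where "SL = (\<Union>j\<in>Oc. {j..<j + L})"
  define Sm where "Sm = (\<Union>j\<in>Oc. {j..<j + m})"
  define G where "G = {j\<in>Oc. \<forall>y\<in>Oc. j < y \<longrightarrow> j + L \<le> y}"
  have finSL: "finite SL" unfolding SL_def using fin by auto
  have sub: "Sm \<subseteq> SL" unfolding SL_def Sm_def using mL by fastforce
  have diff: "SL - Sm = (\<Union>j\<in>G. {j + m..<j + L})"
  proof
    show "SL - Sm \<subseteq> (\<Union>j\<in>G. {j + m..<j + L})"
    proof
      fix x assume x: "x \<in> SL - Sm"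
      then obtain j' where j': "j' \<in> Oc" "j' \<le> x" "x < j' + L" unfolding SL_def by auto
      define A where "A = {j\<in>Oc. j \<le> x}"
      have finA: "finite A" "A \<noteq> {}" unfolding A_def using fin j' by auto
      define j where "j = Max A"
      have jA: "j \<in> Oc" "j \<le> x" using Max_in[OF finA] unfolding j_def A_def by auto
      have jmax: "\<And>z. z \<in> Oc \<Longrightarrow> z \<le> x \<Longrightarrow> z \<le> j" using Max_ge[OF finA(1)] unfolding j_def A_def by auto
      have "j' \<le> j" using jmax j' by auto
      then have xL: "x < j + L" using j' by auto
      have xm: "j + m \<le> x"
      proof (rule ccontr)
        assume "\<not> j + m \<le> x"
        then have "x \<in> Sm" unfolding Sm_def using jA by auto
        then show False using x by auto
      qed
      have "j \<in> G"
        unfolding G_def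
      proof (intro CollectI conjI ballI impI)
        fix y assume y: "y \<in> Oc" "j < y"
        show "j + L \<le> y"
        proof (rule ccontr)
          assume "\<not> j + L \<le> y"
          then obtain y' where "y' \<in> Oc" "j < y'" "y' \<le> j + m" using H[OF jA(1) y] by auto
          then show False using jmax xm by fastforce
        qed
      qed (use jA in auto)
      then show "x \<in> (\<Union>j\<in>G. {j + m..<j + L})" using xL xm by auto
    qed
  next
    show "(\<Union>j\<in>G. {j + m..<j + L}) \<subseteq> SL - Sm"
    proof
      fix x assume "x \<in> (\<Union>j\<in>G. {j + m..<j + L})"
      then obtain j where j: "j \<in> G" "j + m \<le> x" "x < j + L" by auto
      have jO: "j \<in> Oc" using j unfolding G_def by auto
      have "x \<in> SL" unfolding SL_def using jO j by (intro UN_I[of j]) auto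
      moreover have "x \<notin> Sm"
      proof
        assume "x \<in> Sm"
        then obtain j' where j': "j' \<in> Oc" "j' \<le> x" "x < j' + m" unfolding Sm_def by auto
        show False
        proof (cases "j' \<le> j")
          case True then show False using j j' by auto
        next
          case False
          then have "j + L \<le> j'" using j(1) j'(1) unfolding G_def by auto
          then show False using j j' by auto
        qed
      qed
      ultimately show "x \<in> SL - Sm" by auto
    qed
  qed
  have finG: "finite G" unfolding G_def using fin by auto
  have "card (SL - Sm) = (\<Sum>j\<in>G. card {j + m..<j + L})"
    unfolding diff
  proof (rule card_UN_disjoint[OF finG])
    show "\<forall>i\<in>G. finite {i + m..<i + L}" by auto
    show "\<forall>i\<in>G. \<forall>j\<in>G. i \<noteq> j \<longrightarrow> {i + m..<i + L} \<inter> {j + m..<j + L} = {}"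
    proof (intro ballI impI)
      fix i j assume ij: "i \<in> G" "j \<in> G" "i \<noteq> j"
      show "{i + m..<i + L} \<inter> {j + m..<j + L} = {}"
      proof (cases "i < j")
        case True
        then have "i + L \<le> j" using ij unfolding G_def by auto
        then show ?thesis by auto
      next
        case False
        then have "j < i" using ij by auto
        then have "j + L \<le> i" using ij unfolding G_def by auto
        then show ?thesis by auto
      qed
    qed
  qed
  also have "\<dots> = card G * (L - m)" by simp
  finally have "card (SL - Sm) = card G * (L - m)" .
  moreover have "card SL = card Sm + card (SL - Sm)"
    using card_Diff_subset[OF finite_subset[OF sub finSL] sub] card_mono[OF finSL sub] by simp
  ultimately show ?thesis unfolding SL_def Sm_def G_def by simp
qed


lemma period_lemma:
  assumes j: "j \<in> Occ v w" and y: "y \<in> Occ v w" and jy: "j < y" "y < j + length v"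
    and none: "\<And>z. z \<in> Occ v w \<Longrightarrow> j < z \<Longrightarrow> z < y \<Longrightarrow> False"
  shows "sublist (take (y - j) v @ take (y - j) v) w \<and> primitive (take (y - j) v)"
proof -
  define d where "d = y - j"
  define L where "L = length v"
  define f where "f s = w ! (j - 1 + s)" for s
  have dpos: "0 < d" "d < L" using jy unfolding d_def L_def by auto
  have jo: "1 \<le> j" "j - 1 + L \<le> length w" "\<And>t. t < L \<Longrightarrow> f t = v ! t"
    using j unfolding occ_iff f_def L_def by auto
  have yo: "1 \<le> y" "y - 1 + L \<le> length w" "\<And>t. t < L \<Longrightarrow> w ! (y - 1 + t) = v ! t"
    using y unfolding occ_iff L_def by auto
  have fd: "\<And>t. t < L \<Longrightarrow> f (d + t) = v ! t"
  proof -
    fix t assume "t < L"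
    have "j - 1 + (d + t) = y - 1 + t" using jo(1) jy unfolding d_def by auto
    then show "f (d + t) = v ! t" using yo(3)[OF \<open>t < L\<close>] unfolding f_def by metis
  qed
  define u where "u = take d v"
  have lu: "length u = d" using dpos by (simp add: u_def L_def)
  have bound: "j - 1 + 2 * d \<le> length w" using yo(2) dpos jo(1) jy unfolding d_def by auto
  have "u @ u = take (2 * d) (drop (j - 1) w)"
  proof (rule nth_equalityI)
    show "length (u @ u) = length (take (2 * d) (drop (j - 1) w))" using lu bound by auto
  next
    fix t assume t: "t < length (u @ u)"
    then have t2: "t < 2 * d" using lu by simp
    have rhs: "take (2 * d) (drop (j - 1) w) ! t = f t" using t2 bound unfolding f_def by simp
    show "(u @ u) ! t = take (2 * d) (drop (j - 1) w) ! t"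
    proof (cases "t < d")
      case True
      then show ?thesis using rhs jo(3)[of t] dpos lu unfolding u_def by (simp add: nth_append)
    next
      case False
      then have "f t = f (d + (t - d))" by simp
      also have "\<dots> = v ! (t - d)" using fd[of "t - d"] t2 dpos by simp
      finally show ?thesis using rhs False lu t2 unfolding u_def by (simp add: nth_append)
    qed
  qed
  then have sub: "sublist (u @ u) w" using sublist_td by metis
  have prim: "primitive u"
    unfolding primitive_def
  proof (intro allI impI)
    fix z k assume uz: "u = concat (replicate k z)"
    show "z = u"
    proof (rule ccontr)
      assume ne: "z \<noteq> u"
      have lk: "length u = k * length z" using uz by (simp add: length_concat sum_list_replicate)
      then have "k \<noteq> 0" "length z \<noteq> 0" using lu dpos by auto
      moreover have "k \<noteq> 1" using uz ne by auto
      ultimately have kz: "k \<ge> 2" "length z > 0" by auto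
      define q where "q = length z"
      have qd: "q < d" "q > 0" "q dvd d" using kz lk lu unfolding q_def
        by (auto intro: dvdI[of d q k] simp: mult.commute)
      have fz: "\<And>s. s < d + L \<Longrightarrow> f s = z ! (s mod q)"
      proof -
        fix s show "s < d + L \<Longrightarrow> f s = z ! (s mod q)"
        proof (induction s rule: less_induct)
          case (less s)
          show ?case
          proof (cases "s < d")
            case True
            have "f s = v ! s" using jo(3)[of s] True dpos by simp
            also have "\<dots> = u ! s" using True unfolding u_def by simp
            also have "\<dots> = z ! (s mod q)" using uz True lk lu nth_concat_replicate[of s k z]
              unfolding q_def by simp
            finally show ?thesis .
          next
            case False
            have "f s = f (d + (s - d))" using False by simp
            also have "\<dots> = v ! (s - d)" using fd[of "s - d"] less.prems False by simp
            also have "\<dots> = f (s - d)" using jo(3)[of "s - d"] less.prems False by simp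
            also have "\<dots> = z ! ((s - d) mod q)" using less.IH[of "s - d"] less.prems False dpos by simp
            also have "(s - d) mod q = s mod q"
            proof -
              obtain c where c: "d = q * c" using qd(3) by (auto elim: dvdE)
              have "s = (s - d) + q * c" using False c by simp
              then have "s mod q = ((s - d) + q * c) mod q" by simp
              also have "\<dots> = (s - d) mod q" by simp
              finally show ?thesis by simp
            qed
            finally show ?thesis .
          qed
        qed
      qed
      have "j + q \<in> Occ v w"
        unfolding occ_iff
      proof (intro conjI allI impI)
        show "1 \<le> j + q" using jo by simp
        show "j + q - 1 + length v \<le> length w" using yo(2) jo(1) qd jy unfolding d_def L_def by auto
        fix t assume t: "t < length v"
        have "w ! (j + q - 1 + t) = f (q + t)" unfolding f_def using jo(1) by (simp add: algebra_simps)
        also have "\<dots> = z ! ((q + t) mod q)" using fz[of "q + t"] t qd unfolding L_def by simp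
        also have "\<dots> = z ! (t mod q)" by simp
        also have "\<dots> = f t" using fz[of t] t dpos unfolding L_def by simp
        also have "\<dots> = v ! t" using jo(3) t unfolding L_def by simp
        finally show "w ! (j + q - 1 + t) = v ! t" .
      qed
      moreover have "j + q < y" using qd(1) jy unfolding d_def by linarith
      ultimately show False using none[of "j + q"] qd(2) by simp
    qed
  qed
  show ?thesis using sub prim unfolding u_def d_def by simp
qed


lemma parent_bound:
  assumes "cst_explicit w u" "strict_prefix u v"
  shows "length u \<le> cst_parent_len w v"
proof -
  have "length ` {u. strict_prefix u v \<and> cst_explicit w u} \<subseteq> {..<length v}"
    using prefix_length_less by auto
  then have fin: "finite (length ` {u. strict_prefix u v \<and> cst_explicit w u})"
    using finite_subset by blast
  show ?thesis unfolding cst_parent_len_def using assms by (intro Max_ge[OF fin]) auto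
qed

lemma occ_step:
  assumes sv: "sublist v w" and pn: "cst_parent_len w v < n" and nL: "n < length v"
  shows "Occ (take n v) w = Occ (take (Suc n) v) w"
proof -
  define u where "u = take n v"
  define a where "a = v ! n"
  have ua: "take (Suc n) v = u @ [a]" unfolding u_def a_def using nL by (simp add: take_Suc_conv_app_nth)
  have lu: "length u = n" unfolding u_def using nL by simp
  have sp: "strict_prefix u v" unfolding u_def using nL
    by (metis lu nat_less_le take_is_prefix prefix_order.le_less u_def)
  have ne: "\<not> cst_explicit w u"
  proof
    assume "cst_explicit w u"
    then have "length u \<le> cst_parent_len w v" by (rule parent_bound[OF _ sp])
    then show False using pn lu by simp
  qed
  have nsuf: "\<not> suffix u w" and ncard: "\<not> card {b. sublist (u @ [b]) w} \<ge> 2"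
    using ne unfolding cst_explicit_def st_explicit_def
    using sublist_order.order_trans[OF prefix_imp_sublist[OF take_is_prefix[of n v]] sv]
    unfolding u_def by auto
  have aB: "sublist (u @ [a]) w"
    using sublist_order.order_trans[OF prefix_imp_sublist[OF take_is_prefix[of "Suc n" v]] sv] ua by simp
  have uniq: "\<And>b. sublist (u @ [b]) w \<Longrightarrow> b = a"
  proof (rule ccontr)
    fix b assume b: "sublist (u @ [b]) w" "b \<noteq> a"
    have fin: "finite {b. sublist (u @ [b]) w}"
      by (rule finite_subset[of _ "set w"]) (auto dest: set_mono_sublist)
    have "{a, b} \<subseteq> {b. sublist (u @ [b]) w}" using b aB by auto
    from card_mono[OF fin this] b have "card {b. sublist (u @ [b]) w} \<ge> 2" by simp
    then show False using ncard by simp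
  qed
  show ?thesis
  proof
    show "Occ (take n v) w \<subseteq> Occ (take (Suc n) v) w"
    proof
      fix j assume j: "j \<in> Occ (take n v) w"
      have jo: "1 \<le> j" "j - 1 + n \<le> length w" "\<And>t. t < n \<Longrightarrow> w ! (j - 1 + t) = u ! t"
        using j unfolding occ_iff u_def[symmetric] lu by auto
      have tk: "take n (drop (j - 1) w) = u" using j lu unfolding Occ_def u_def[symmetric] by auto
      have lt: "j - 1 + n < length w"
      proof (rule ccontr)
        assume "\<not> j - 1 + n < length w"
        then have "length (drop (j - 1) w) = n" using jo by auto
        then have "drop (j - 1) w = u" using tk by simp
        then have "suffix u w" using suffix_drop by metis
        then show False using nsuf by simp
      qed
      define b where "b = w ! (j - 1 + n)"
      have "u @ [b] = take (Suc n) (drop (j - 1) w)"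
      proof (rule nth_equalityI)
        show "length (u @ [b]) = length (take (Suc n) (drop (j - 1) w))" using lu lt by auto
      next
        fix t assume "t < length (u @ [b])"
        then have t: "t < Suc n" using lu by simp
        show "(u @ [b]) ! t = take (Suc n) (drop (j - 1) w) ! t"
        proof (cases "t < n")
          case True then show ?thesis using jo(3)[of t] lu lt t by (simp add: nth_append)
        next
          case False then have "t = n" using t by simp
          then show ?thesis using lu lt b_def by (simp add: nth_append)
        qed
      qed
      then have "sublist (u @ [b]) w" using sublist_td by metis
      then have "b = a" using uniq by simp
      show "j \<in> Occ (take (Suc n) v) w"
        unfolding ua occ_iff
      proof (intro conjI allI impI)
        show "1 \<le> j" using jo by simp
        show "j - 1 + length (u @ [a]) \<le> length w" using lt lu by simp
        fix t assume "t < length (u @ [a])"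
        then have t: "t < Suc n" using lu by simp
        show "w ! (j - 1 + t) = (u @ [a]) ! t"
        proof (cases "t < n")
          case True then show ?thesis using jo(3)[of t] lu by (simp add: nth_append)
        next
          case False then have "t = n" using t by simp
          then show ?thesis using lu \<open>b = a\<close> b_def by (simp add: nth_append)
        qed
      qed
    qed
  next
    show "Occ (take (Suc n) v) w \<subseteq> Occ (take n v) w"
    proof
      fix j assume "j \<in> Occ (take (Suc n) v) w"
      then have jo: "1 \<le> j" "j - 1 + Suc n \<le> length w" "\<And>t. t < Suc n \<Longrightarrow> w ! (j - 1 + t) = (u @ [a]) ! t"
        unfolding ua occ_iff using lu by auto
      show "j \<in> Occ (take n v) w"
        unfolding u_def[symmetric] occ_iff
      proof (intro conjI allI impI)
        show "1 \<le> j" using jo by simp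
        show "j - 1 + length u \<le> length w" using jo lu by simp
        fix t assume "t < length u"
        then show "w ! (j - 1 + t) = u ! t" using jo(3)[of t] lu by (simp add: nth_append)
      qed
    qed
  qed
qed

lemma occ_const:
  assumes sv: "sublist v w" and pm: "cst_parent_len w v < m" and mL: "m \<le> length v"
  shows "Occ (take m v) w = Occ v w"
  using mL
proof (induction m rule: inc_induct)
  case base then show ?case by simp
next
  case (step n)
  then show ?case using occ_step[OF sv, of n] pm
    by (metis (no_types) le_less_trans less_le_trans order.refl) 
qed


theorem lemma1:
  fixes w v :: "'a list" and i :: nat
  assumes "sublist v w" and "cst_explicit w v" and "v \<noteq> []"
    and "1 \<le> i" and "i \<le> edge_len w v"
  shows "int (cov w (take (length v - i) v)) = int (cov w v) - int i * int (Delta w v)"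
proof -
  define L where "L = length v"
  define p where "p = cst_parent_len w v"
  define m where "m = L - i"
  define Oc where "Oc = Occ v w"
  have pm: "p < m" "m \<le> L" "L - m = i" using assms(4,5) unfolding edge_len_def m_def p_def L_def by auto
  have fin: "finite Oc" unfolding Oc_def by (rule occ_finite)
  have occm: "Occ (take m v) w = Oc" unfolding Oc_def
    using occ_const[OF assms(1)] pm unfolding p_def L_def by auto
  have H: "\<exists>y'\<in>Oc. j < y' \<and> y' \<le> j + m"
    if j: "j \<in> Oc" and y: "y \<in> Oc" and jy: "j < y" "y < j + L" for j y
  proof -
    define A where "A = {z\<in>Oc. j < z}"
    have finA: "finite A" "A \<noteq> {}" unfolding A_def using fin y jy by auto
    define y0 where "y0 = Min A"
    have y0: "y0 \<in> Oc" "j < y0" using Min_in[OF finA] unfolding y0_def A_def by auto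
    have y0le: "y0 \<le> y" using Min_le[OF finA(1)] y jy unfolding y0_def A_def by auto
    have none: "\<And>z. z \<in> Occ v w \<Longrightarrow> j < z \<Longrightarrow> z < y0 \<Longrightarrow> False"
      using Min_le[OF finA(1)] unfolding y0_def A_def Oc_def by fastforce
    have P: "sublist (take (y0 - j) v @ take (y0 - j) v) w \<and> primitive (take (y0 - j) v)"
      by (rule period_lemma[OF j[unfolded Oc_def] y0(1)[unfolded Oc_def] y0(2) _ none])
        (use y0le jy in \<open>simp add: L_def\<close>)
    have lt: "y0 - j < L" using y0le jy by simp
    have sp: "strict_prefix (take (y0 - j) v) v"
      using lt unfolding L_def
      by (metis length_take min.absorb4 nat_less_le prefix_order.le_less take_is_prefix)
    have "sublist (take (y0 - j) v) w"
      using P sublist_order.order_trans[OF sublist_append_leftI] by blast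
    then have "cst_explicit w (take (y0 - j) v)" using P unfolding cst_explicit_def by blast
    from parent_bound[OF this sp] have "length (take (y0 - j) v) \<le> p" unfolding p_def .
    then have "y0 - j \<le> p" using lt unfolding L_def by simp
    then show ?thesis using y0 pm by (intro bexI[of _ y0]) auto
  qed
  have cnt: "card (\<Union>j\<in>Oc. {j..<j + L}) = card (\<Union>j\<in>Oc. {j..<j + m})
           + (L - m) * card {j\<in>Oc. \<forall>y\<in>Oc. j < y \<longrightarrow> j + L \<le> y}"
    by (rule count_lemma[OF fin pm(2) H])
  have c1: "cov w v = card (\<Union>j\<in>Oc. {j..<j + L})"
    unfolding cov_def covered_eq Oc_def L_def ..
  have c2: "cov w (take (length v - i) v) = card (\<Union>j\<in>Oc. {j..<j + m})"
    unfolding cov_def covered_eq using occm pm unfolding m_def L_def by simp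
  have c3: "Delta w v = card {j\<in>Oc. \<forall>y\<in>Oc. j < y \<longrightarrow> j + L \<le> y}"
    unfolding Delta_def using delta_ge[OF fin, of v w] unfolding Oc_def L_def by simp
  show ?thesis using cnt c1 c2 c3 pm(3) by simp
qed

end
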